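(* Let $k\ge0$, let $s$ be the singular factor of length $q_k$ of slope $\alpha$, let $w\in\mathcal{L}_\alpha$ be a complete first return to $s$ in the same phase, and write $s^{-1}ws^{-1}=u_0u_1\cdots u_{n-1}$ with $|u_0|=\cdots=|u_{n-1}|=q_k$. Put $\lambda=q_{k+1}-p_{k+1}-1$ if $k$ is odd and $\lambda=p_{k+1}-1$ if $k$ is even. Then the words $u_0,u_1,\ldots,u_{\lambda-1}$ end with the same letter as $s$, and the words $u_{n-\lambda},u_{n-\lambda+1},\ldots,u_{n-1}$ begin with the same letter as $s$. Moreover, $s$ begins and ends with the same letter.
   Context: $\alpha\in(0,1)$ irrational, $\alpha=[0;a_1,a_2,\ldots]$ with positive integers $a_i$, $a_1\ge2$; $p_{-1}=1,q_{-1}=0,p_0=0,q_0=1,p_1=1,q_1=a_1$, $p_k=a_kp_{k-1}+p_{k-2}$, $q_k=a_kq_{k-1}+q_{k-2}$ ($k\ge2$). Identify the circle $\mathbb{T}$ with $[0,1)$, $R(\rho)=\{\rho+\alpha\}$; fix one convention, $I_0=[0,1-\alpha)$, $I_1=[1-\alpha,1)$ or $I_0=(0,1-\alpha]$, $I_1=(1-\alpha,1]$. $\mathbf{s}_{\rho,\alpha}$ has $n$-th letter $0$ if $R^n(\rho)\in I_0$ and $1$ otherwise; all such words share the set $\mathcal{L}_\alpha$ of finite factors. For $v=b_0\cdots b_{n-1}\in\mathcal{L}_\alpha$, $[v]=\bigcap_{i}R^{-i}(I_{b_i})$ ($\mathbf{s}_{\rho,\alpha}$ begins with $v$ iff $\rho\in[v]$).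 The singular factor of length $q_k$ is the unique $s\in\mathcal{L}_\alpha$ of length $q_k$ with $[s]$ having endpoints $0$ and $\{-q_k\alpha\}$. A word $u$ is a complete first return to $v$ in the same phase if $u$ has $v$ as a prefix and a suffix, $|u|\equiv0\pmod{|v|}$, $u$ contains at least two occurrences of $v$, and every occurrence of $v$ in $u$ at a position $i\equiv0\pmod{|v|}$ (positions from $0$) has $i=0$ or $i=|u|-|v|$. $s^{-1}ws^{-1}$ denotes $w$ with its prefix $s$ and suffix $s$ removed. *)

theory Defs
  imports Complex_Main "HOL-Library.Sublist"
begin

text \<open>Partial quotients a 1, a 2, ... (a 0 is ignored). cf_p a k = p_k, cf_q a k = q_k for k \<ge> 0.\<close>
fun cf_p :: "(nat \<Rightarrow> nat) \<Rightarrow> nat \<Rightarrow> nat" where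
  "cf_p a 0 = 0"
| "cf_p a (Suc 0) = 1"
| "cf_p a (Suc (Suc k)) = a (Suc (Suc k)) * cf_p a (Suc k) + cf_p a k"

fun cf_q :: "(nat \<Rightarrow> nat) \<Rightarrow> nat \<Rightarrow> nat" where
  "cf_q a 0 = 1"
| "cf_q a (Suc 0) = a 1"
| "cf_q a (Suc (Suc k)) = a (Suc (Suc k)) * cf_q a (Suc k) + cf_q a k"

definition cf_expansion :: "real \<Rightarrow> (nat \<Rightarrow> nat) \<Rightarrow> bool" where
  "cf_expansion \<alpha> a \<longleftrightarrow> 0 < \<alpha> \<and> \<alpha> < 1 \<and> \<alpha> \<notin> \<rat> \<and>
     (\<forall>i\<ge>1. a i > 0) \<and> a 1 \<ge> 2 \<and>
     (\<lambda>k. real (cf_p a k) / real (cf_q a k)) \<longlonglongrightarrow> \<alpha>"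

text \<open>Points of the circle are represented by reals modulo 1.
  Convention conv = True: I_0 = [0,1-alpha), I_1 = [1-alpha,1).
  Convention conv = False: I_0 = (0,1-alpha], I_1 = (1-alpha,1] (the point 1 being 0 mod 1).\<close>
definition letter :: "bool \<Rightarrow> real \<Rightarrow> real \<Rightarrow> nat" where
  "letter conv \<alpha> x =
     (if conv then (if frac x < 1 - \<alpha> then 0 else 1)
      else (if 0 < frac x \<and> frac x \<le> 1 - \<alpha> then 0 else 1))"

definition rot_word :: "bool \<Rightarrow> real \<Rightarrow> real \<Rightarrow> nat \<Rightarrow> nat" where
  "rot_word conv \<alpha> \<rho> n = letter conv \<alpha> (\<rho> + real n * \<alpha>)"

definition lang :: "bool \<Rightarrow> real \<Rightarrow> nat list set" where
  "lang conv \<alpha> = {v. \<exists>\<rho> m. v = map (\<lambda>i. rot_word conv \<alpha> \<rho> (m + i)) [0..<length v]}"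

definition cyl :: "bool \<Rightarrow> real \<Rightarrow> nat list \<Rightarrow> real set" where
  "cyl conv \<alpha> v = {\<rho>. 0 \<le> \<rho> \<and> \<rho> < 1 \<and> (\<forall>i<length v. rot_word conv \<alpha> \<rho> i = v ! i)}"

text \<open>C (subset of [0,1)) is an arc of the circle with endpoints x and y (x, y in [0,1)):
  it contains one of the two open arcs between x and y and is contained in its closure.\<close>
definition arc_endpoints :: "real set \<Rightarrow> real \<Rightarrow> real \<Rightarrow> bool" where
  "arc_endpoints C x y \<longleftrightarrow>
     (let l = min x y; r = max x y in
       ({l<..<r} \<subseteq> C \<and> C \<subseteq> {l..r}) \<or>
       ({0..<1} - {l..r} \<subseteq> C \<and> C \<subseteq> {0..<1} - {l<..<r}))"

definition singular_factor :: "bool \<Rightarrow> real \<Rightarrow> (nat \<Rightarrow> nat) \<Rightarrow> nat \<Rightarrow> nat list \<Rightarrow> bool" where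
  "singular_factor conv \<alpha> a k s \<longleftrightarrow>
     s \<in> lang conv \<alpha> \<and> length s = cf_q a k \<and>
     arc_endpoints (cyl conv \<alpha> s) 0 (frac (- real (cf_q a k) * \<alpha>))"

definition occurs_at :: "'a list \<Rightarrow> 'a list \<Rightarrow> nat \<Rightarrow> bool" where
  "occurs_at v u i \<longleftrightarrow> i + length v \<le> length u \<and> take (length v) (drop i u) = v"

definition complete_first_return :: "'a list \<Rightarrow> 'a list \<Rightarrow> bool" where
  "complete_first_return v u \<longleftrightarrow>
     prefix v u \<and> suffix v u \<and> length v dvd length u \<and>
     card {i. occurs_at v u i} \<ge> 2 \<and>
     (\<forall>i. occurs_at v u i \<and> length v dvd i \<longrightarrow> i = 0 \<or> i = length u - length v)"

end

theory Submission
  imports Defs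
begin


lemma cf_det: "real (cf_p a (Suc k)) * real (cf_q a k) - real (cf_p a k) * real (cf_q a (Suc k)) = (-1)^k"
proof (induction k)
  case 0 then show ?case by simp
next
  case (Suc k)
  have "real (cf_p a (Suc (Suc k))) * real (cf_q a (Suc k)) - real (cf_p a (Suc k)) * real (cf_q a (Suc (Suc k)))
     = - (real (cf_p a (Suc k)) * real (cf_q a k) - real (cf_p a k) * real (cf_q a (Suc k)))"
    by (simp add: algebra_simps)
  then show ?case using Suc by simp
qed

lemma cf_det2: "real (cf_p a (Suc (Suc k))) * real (cf_q a k) - real (cf_p a k) * real (cf_q a (Suc (Suc k))) = real (a (Suc (Suc k))) * (-1)^k"
proof -
  have "real (cf_p a (Suc (Suc k))) * real (cf_q a k) - real (cf_p a k) * real (cf_q a (Suc (Suc k)))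
     = real (a (Suc (Suc k))) * (real (cf_p a (Suc k)) * real (cf_q a k) - real (cf_p a k) * real (cf_q a (Suc k)))"
    by (simp add: algebra_simps)
  then show ?thesis using cf_det[of a k] by simp
qed

lemma cf_pos:
  assumes "\<forall>i\<ge>1. a i > 0" "a 1 \<ge> 2"
  shows "cf_p a k < cf_q a k \<and> cf_p a (Suc k) < cf_q a (Suc k) \<and> (k \<ge> 1 \<longrightarrow> cf_p a k \<ge> 1) \<and> cf_p a (Suc k) \<ge> 1"
proof (induction k)
  case 0 then show ?case using assms by simp
next
  case (Suc k)
  have a: "a (Suc (Suc k)) \<ge> 1" using assms(1)[rule_format, of "Suc (Suc k)"] by linarith
  have "a (Suc (Suc k)) * cf_p a (Suc k) \<le> a (Suc (Suc k)) * cf_q a (Suc k)" using Suc by simp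
  then have "cf_p a (Suc (Suc k)) < cf_q a (Suc (Suc k))" using Suc by (simp add: add_le_less_mono)
  moreover have "cf_p a (Suc (Suc k)) \<ge> 1" proof -
    have "0 < a (Suc (Suc k)) * cf_p a (Suc k)" using Suc a by simp
    moreover have "cf_p a (Suc (Suc k)) = a (Suc (Suc k)) * cf_p a (Suc k) + cf_p a k" by simp
    ultimately show ?thesis by linarith
  qed
  ultimately show ?case using Suc by simp
qed


lemma cf_sides:
  assumes "cf_expansion \<alpha> a"
  shows "(even k \<longrightarrow> real (cf_p a k) < \<alpha> * real (cf_q a k)) \<and> (odd k \<longrightarrow> \<alpha> * real (cf_q a k) < real (cf_p a k))"
proof -
  have A: "\<forall>i\<ge>1. a i > 0" "a 1 \<ge> 2" and L: "(\<lambda>k. real (cf_p a k) / real (cf_q a k)) \<longlonglongrightarrow> \<alpha>"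
    using assms unfolding cf_expansion_def by blast+
  define r where "r k = real (cf_p a k) / real (cf_q a k)" for k
  have qpos: "real (cf_q a k) > 0" for k using cf_pos[OF A, of k] by linarith
  have step: "r (Suc (Suc k)) - r k = real (a (Suc (Suc k))) * (-1)^k / (real (cf_q a k) * real (cf_q a (Suc (Suc k))))" for k
  proof -
    have "r (Suc (Suc k)) - r k = (real (cf_p a (Suc (Suc k))) * real (cf_q a k) - real (cf_p a k) * real (cf_q a (Suc (Suc k)))) / (real (cf_q a (Suc (Suc k))) * real (cf_q a k))"
      unfolding r_def using qpos[of k] qpos[of "Suc (Suc k)"] by (simp add: diff_frac_eq)
    then show ?thesis using cf_det2[of a k] by (simp add: mult.commute)
  qed
  have apos: "real (a (Suc (Suc k))) > 0" for k using A(1)[rule_format, of "Suc (Suc k)"] by simp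
  have ev: "r (2*j) < r (2*j+2)" for j
  proof -
    have "r (Suc (Suc (2*j))) - r (2*j) > 0" using step[of "2*j"] apos[of "2*j"] qpos[of "2*j"] qpos[of "Suc (Suc (2*j))"]
      by (simp add: divide_pos_pos)
    then show ?thesis by (simp add: numeral_2_eq_2)
  qed
  have od: "r (2*j+3) < r (2*j+1)" for j
  proof -
    have "r (Suc (Suc (2*j+1))) - r (2*j+1) < 0" using step[of "2*j+1"] apos[of "2*j+1"] qpos[of "2*j+1"] qpos[of "Suc (Suc (2*j+1))"]
      by (simp add: divide_neg_pos)
    then show ?thesis by (simp add: numeral_3_eq_3)
  qed
  have Le: "(\<lambda>j. r (2*j)) \<longlonglongrightarrow> \<alpha>"
  proof -
    have "(r \<circ> (\<lambda>j. 2*j)) \<longlonglongrightarrow> \<alpha>" using LIMSEQ_subseq_LIMSEQ[of r \<alpha> "\<lambda>j. 2*j"] L unfolding r_def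
      by (simp add: strict_mono_def)
    then show ?thesis by (simp add: o_def)
  qed
  have Lo: "(\<lambda>j. r (2*j+1)) \<longlonglongrightarrow> \<alpha>"
  proof -
    have "(r \<circ> (\<lambda>j. 2*j+1)) \<longlonglongrightarrow> \<alpha>" using LIMSEQ_subseq_LIMSEQ[of r \<alpha> "\<lambda>j. 2*j+1"] L unfolding r_def
      by (simp add: strict_mono_def)
    then show ?thesis by (simp add: o_def)
  qed
  have ie: "incseq (\<lambda>j. r (2*j))"
    proof (rule incseq_SucI)
    fix n show "r (2*n) \<le> r (2 * Suc n)" using ev[of n] by simp
  qed
  have de: "decseq (\<lambda>j. r (2*j+1))"
  proof (rule decseq_SucI)
    fix n show "r (2 * Suc n + 1) \<le> r (2*n+1)" using od[of n] by (simp add: numeral_3_eq_3)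
  qed
  have e: "r (2*j) < \<alpha>" for j
    using ev[of j] incseq_le[OF ie Le, of "Suc j"] by simp
  have o: "\<alpha> < r (2*j+1)" for j
    using od[of j] decseq_ge[OF de Lo, of "Suc j"] by (simp add: numeral_3_eq_3)
  show ?thesis
  proof (cases "even k")
    case True
    then obtain j where "k = 2*j" by blast
    then show ?thesis using e[of j] qpos[of k] unfolding r_def by (simp add: field_simps)
  next
    case False
    then obtain j where "k = 2*j+1" using oddE by blast
    then show ?thesis using o[of j] qpos[of k] unfolding r_def by (simp add: field_simps)
  qed
qed



lemma frac_real_nat: "frac (x + real N) = frac x"
  using frac_add_of_int_right[of x "int N"] by simp

lemma letter_int: "letter c \<alpha> (x + of_int N) = letter c \<alpha> x"
  by (simp add: letter_def)

lemma frac_neg_small: "-1 \<le> z \<Longrightarrow> z < 0 \<Longrightarrow> frac z = z + 1"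
  by (subst frac_unique_iff) (auto intro: Ints_minus Ints_1)

lemma frac_pos_small: "0 \<le> z \<Longrightarrow> z < 1 \<Longrightarrow> frac z = z"
  by (simp add: frac_eq)

lemma letter_neg: "-1 \<le> z \<Longrightarrow> z < 0 \<Longrightarrow> letter c \<alpha> z =
   (if c then (if z + 1 < 1 - \<alpha> then 0 else 1) else (if 0 < z + 1 \<and> z + 1 \<le> 1 - \<alpha> then 0 else 1))"
  unfolding letter_def by (simp add: frac_neg_small)

lemma letter_pos: "0 \<le> z \<Longrightarrow> z < 1 \<Longrightarrow> letter c \<alpha> z =
   (if c then (if z < 1 - \<alpha> then 0 else 1) else (if 0 < z \<and> z \<le> 1 - \<alpha> then 0 else 1))"
  unfolding letter_def by (simp add: frac_pos_small)

lemma last_take_drop: "1 \<le> q \<Longrightarrow> d + q \<le> length w \<Longrightarrow> last (take q (drop d w)) = w ! (d + q - 1)"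
proof -
  assume h: "1 \<le> q" "d + q \<le> length w"
  have ne: "take q (drop d w) \<noteq> []" using h by auto
  have len: "length (take q (drop d w)) = q" using h by auto
  show ?thesis using ne len h by (simp add: last_conv_nth)
qed

lemma hd_take_drop: "1 \<le> q \<Longrightarrow> d + q \<le> length w \<Longrightarrow> hd (take q (drop d w)) = w ! d"
proof -
  assume h: "1 \<le> q" "d + q \<le> length w"
  have ne: "take q (drop d w) \<noteq> []" using h by auto
  show ?thesis using ne h by (simp add: hd_conv_nth)
qed

lemma letter_nat: "letter c \<alpha> (x + real N) = letter c \<alpha> x"
  by (simp add: letter_def frac_real_nat)

lemma L0p: "0 < z \<Longrightarrow> z < 1 - \<alpha> \<Longrightarrow> 0 < \<alpha> \<Longrightarrow> letter c \<alpha> z = 0"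
  by (subst letter_pos) auto
lemma L1p: "1 - \<alpha> < z \<Longrightarrow> z < 1 \<Longrightarrow> \<alpha> < 1 \<Longrightarrow> letter c \<alpha> z = 1"
  by (subst letter_pos) auto
lemma L0n: "-1 < z \<Longrightarrow> z < - \<alpha> \<Longrightarrow> 0 < \<alpha> \<Longrightarrow> letter c \<alpha> z = 0"
  by (subst letter_neg) auto
lemma L1n: "- \<alpha> < z \<Longrightarrow> z < 0 \<Longrightarrow> \<alpha> < 1 \<Longrightarrow> letter c \<alpha> z = 1"
  by (subst letter_neg) auto
lemma LT0: "\<alpha> < 1 \<Longrightarrow> letter True \<alpha> 0 = 0" by (simp add: letter_def)
lemma LF0: "letter False \<alpha> 0 = 1" by (simp add: letter_def)
lemma LTa: "0 < \<alpha> \<Longrightarrow> \<alpha> < 1 \<Longrightarrow> letter True \<alpha> (- \<alpha>) = 1" by (subst letter_neg) auto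
lemma LFa: "0 < \<alpha> \<Longrightarrow> \<alpha> < 1 \<Longrightarrow> letter False \<alpha> (- \<alpha>) = 0" by (subst letter_neg) auto
lemma LT1a: "0 < \<alpha> \<Longrightarrow> \<alpha> < 1 \<Longrightarrow> letter True \<alpha> (1 - \<alpha>) = 1" by (subst letter_pos) auto
lemma LF1a: "0 < \<alpha> \<Longrightarrow> \<alpha> < 1 \<Longrightarrow> letter False \<alpha> (1 - \<alpha>) = 0" by (subst letter_pos) auto



theorem lemma4p5:
  fixes conv :: bool and \<alpha> :: real and a :: "nat \<Rightarrow> nat" and k :: nat
    and s w :: "nat list"
  assumes "cf_expansion \<alpha> a"
    and "singular_factor conv \<alpha> a k s"
    and "w \<in> lang conv \<alpha>"
    and "complete_first_return s w"
  shows "let q = cf_q a k;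
             n = (length w - 2 * q) div q;
             u = (\<lambda>j. take q (drop (q + j * q) w));
             lam = (if odd k then cf_q a (k+1) - cf_p a (k+1) - 1 else cf_p a (k+1) - 1)
         in (\<forall>j. j < lam \<and> j < n \<longrightarrow> last (u j) = last s) \<and>
            (\<forall>j. n - lam \<le> j \<and> j < n \<longrightarrow> hd (u j) = hd s) \<and>
            hd s = last s"
proof -
  have A1: "\<forall>i\<ge>1. a i > 0" and A2: "a 1 \<ge> 2" and al0: "0 < \<alpha>" and al1: "\<alpha> < 1"
    using assms(1) unfolding cf_expansion_def by blast+
  define q where "q = cf_q a k"
  define n where "n = (length w - 2 * q) div q"
  define u where "u = (\<lambda>j. take q (drop (q + j * q) w))"
  define lam where "lam = (if odd k then cf_q a (k+1) - cf_p a (k+1) - 1 else cf_p a (k+1) - 1)"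
  have sl: "length s = q" using assms(2) unfolding singular_factor_def q_def by blast
  have qpos: "q \<ge> 1" using cf_pos[OF A1 A2, of k] unfolding q_def by linarith
  have main: "(\<forall>j. j < lam \<and> j < n \<longrightarrow> last (u j) = last s) \<and>
            (\<forall>j. n - lam \<le> j \<and> j < n \<longrightarrow> hd (u j) = hd s) \<and>
            hd s = last s"
  proof (cases "k = 0")
    case True
    then have "lam = 0" unfolding lam_def by simp
    moreover have "q = 1" unfolding q_def using True by simp
    then obtain x where "s = [x]" using sl by (metis One_nat_def length_0_conv length_Suc_conv)
    ultimately show ?thesis by simp
  next
    case False
    then have k1: "k \<ge> 1" by simp
    define p where "p = cf_p a k"
    define P1 where "P1 = real (cf_p a (Suc k))"
    define Q1 where "Q1 = real (cf_q a (Suc k))"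
    define \<theta> where "\<theta> = real q * \<alpha> - real p"
    define \<theta>1 where "\<theta>1 = Q1 * \<alpha> - P1"
    have det: "P1 * real q - real p * Q1 = (-1)^k"
      using cf_det[of a k] by (simp add: q_def p_def P1_def Q1_def)
    have id1: "P1 * \<theta> - real p * \<theta>1 = (-1)^k * \<alpha>"
    proof -
      have "P1 * \<theta> - real p * \<theta>1 = \<alpha> * (P1 * real q - real p * Q1)"
        by (simp add: \<theta>_def \<theta>1_def algebra_simps)
      then show ?thesis using det by simp
    qed
    have id2: "Q1 * \<theta> - real q * \<theta>1 = (-1)^k"
    proof -
      have "Q1 * \<theta> - real q * \<theta>1 = P1 * real q - real p * Q1"
        by (simp add: \<theta>_def \<theta>1_def algebra_simps)
      then show ?thesis using det by simp
    qed
    have pq: "p < q" "P1 < Q1" "p \<ge> 1" "P1 \<ge> 1"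
      using cf_pos[OF A1 A2, of k] k1 unfolding p_def q_def P1_def Q1_def by auto
    have pq': "Q1 - P1 \<ge> 1" "real q - real p \<ge> 1"
    proof -
      have "cf_p a (Suc k) + 1 \<le> cf_q a (Suc k)" using cf_pos[OF A1 A2, of k] by simp
      then have "real (cf_p a (Suc k)) + 1 \<le> real (cf_q a (Suc k))" by linarith
      then show "Q1 - P1 \<ge> 1" unfolding P1_def Q1_def by simp
      have "p + 1 \<le> q" using pq by simp
      then show "real q - real p \<ge> 1" by linarith
    qed
    have sd0: "(even k \<longrightarrow> real p < \<alpha> * real q) \<and> (odd k \<longrightarrow> \<alpha> * real q < real p)"
      using cf_sides[OF assms(1), of k] unfolding p_def q_def .
    have sd1: "(even (Suc k) \<longrightarrow> P1 < \<alpha> * Q1) \<and> (odd (Suc k) \<longrightarrow> \<alpha> * Q1 < P1)"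
      using cf_sides[OF assms(1), of "Suc k"] unfolding P1_def Q1_def .
    have id1': "P1 * \<theta> - real p * \<theta>1 = (if even k then \<alpha> else - \<alpha>)" using id1 by simp
    have id2': "Q1 * \<theta> - real q * \<theta>1 = (if even k then 1 else - 1)" using id2 by simp
    have dist1: "(Q1 - P1) * \<theta> = Q1 * \<theta> - P1 * \<theta>" "(real q - real p) * \<theta>1 = real q * \<theta>1 - real p * \<theta>1"
      by (simp_all add: algebra_simps)
    have num_even: "0 < \<theta> \<and> \<theta> < \<alpha> \<and> \<theta> < 1 - \<alpha> \<and> P1 * \<theta> < \<alpha>" if ev: "even k"
    proof -
      have t0: "0 < \<theta>" using sd0 ev unfolding \<theta>_def by (simp add: mult.commute)
      have t1: "\<theta>1 < 0" using sd1 ev unfolding \<theta>1_def by (simp add: mult.commute)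
      have a1: "real p * \<theta>1 < 0" using pq(3) t1 by (simp add: mult_pos_neg)
      have a2: "(real q - real p) * \<theta>1 < 0" using pq'(2) t1 by (simp add: mult_pos_neg)
      have b1: "\<theta> \<le> P1 * \<theta>" proof -
        have "1 * \<theta> \<le> P1 * \<theta>" by (rule mult_right_mono) (use pq(4) t0 in auto)
        then show ?thesis by simp
      qed
      have b2: "\<theta> \<le> (Q1 - P1) * \<theta>" proof -
        have "1 * \<theta> \<le> (Q1 - P1) * \<theta>" by (rule mult_right_mono) (use pq'(1) t0 in auto)
        then show ?thesis by simp
      qed
      have "P1 * \<theta> - real p * \<theta>1 = \<alpha>" "Q1 * \<theta> - real q * \<theta>1 = 1" using id1' id2' ev by simp_all
      then show ?thesis using t0 a1 a2 b1 b2 dist1 by (intro conjI; linarith)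
    qed
    have num_odd: "\<theta> < 0 \<and> - \<theta> < \<alpha> \<and> - \<theta> < 1 - \<alpha> \<and> (Q1 - P1) * (- \<theta>) < 1 - \<alpha>" if od: "odd k"
    proof -
      have t0: "\<theta> < 0" using sd0 od unfolding \<theta>_def by (simp add: mult.commute)
      have t1: "0 < \<theta>1" using sd1 od unfolding \<theta>1_def by (simp add: mult.commute)
      have a1: "real p * \<theta>1 > 0" using pq(3) t1 by simp
      have a2: "(real q - real p) * \<theta>1 > 0" using pq'(2) t1 by simp
      have b1: "- \<theta> \<le> P1 * (- \<theta>)" proof -
        have "1 * (- \<theta>) \<le> P1 * (- \<theta>)" by (rule mult_right_mono) (use pq(4) t0 in auto)
        then show ?thesis by simp
      qed
      have b2: "- \<theta> \<le> (Q1 - P1) * (- \<theta>)" proof -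
        have "1 * (- \<theta>) \<le> (Q1 - P1) * (- \<theta>)" by (rule mult_right_mono) (use pq'(1) t0 in auto)
        then show ?thesis by simp
      qed
      have "P1 * \<theta> - real p * \<theta>1 = - \<alpha>" "Q1 * \<theta> - real q * \<theta>1 = - 1" using id1' id2' od by simp_all
      then show ?thesis using t0 a1 a2 b1 b2 dist1 by (intro conjI; linarith)
    qed
    have qa: "real (q - 1) * \<alpha> = \<theta> - \<alpha> + real p" using qpos unfolding \<theta>_def by (simp add: of_nat_diff algebra_simps)
    define C where "C = cyl conv \<alpha> s"
    have inC: "letter conv \<alpha> (y + real i * \<alpha>) = s!i" if "y \<in> C" "i < q" for y i
      using that sl unfolding C_def cyl_def rot_word_def by auto
    have inC0: "letter conv \<alpha> y = s!0" if "y \<in> C" for y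
      using inC[OF that, of 0] qpos by simp
    have inCq: "letter conv \<alpha> (y + \<theta> - \<alpha>) = s!(q-1)" if "y \<in> C" for y
    proof -
      have "letter conv \<alpha> (y + real (q-1) * \<alpha>) = s!(q-1)" using inC[OF that, of "q-1"] qpos by simp
      moreover have "y + real (q-1) * \<alpha> = (y + \<theta> - \<alpha>) + real p" using qa by simp
      ultimately show ?thesis by (simp only: letter_nat)
    qed
    have toC: "frac x \<in> C" if h: "\<forall>i<q. letter conv \<alpha> (x + real i * \<alpha>) = s!i" for x
    proof -
      have "letter conv \<alpha> (frac x + real i * \<alpha>) = letter conv \<alpha> (x + real i * \<alpha>)" for i
      proof -
        have "frac x + real i * \<alpha> = (x + real i * \<alpha>) + of_int (- \<lfloor>x\<rfloor>)" by (simp add: frac_def)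
        then show ?thesis by (simp only: letter_int)
      qed
      then show "frac x \<in> C" using h sl unfolding C_def cyl_def rot_word_def by (auto simp: frac_lt_1)
    qed
    have arc: "arc_endpoints C 0 (frac (- real q * \<alpha>))"
      using assms(2) unfolding singular_factor_def C_def q_def by blast
    have CJe: "(y = 0 \<and> \<not> conv) \<or> (1 - \<theta> \<le> y \<and> y < 1 \<and> (\<not> conv \<longrightarrow> y \<noteq> 1 - \<theta>))" if ev: "even k" and yC: "y \<in> C" for y
    proof -
      obtain n1: "0 < \<theta>" "\<theta> < \<alpha>" "\<theta> < 1-\<alpha>" "P1*\<theta> < \<alpha>" using num_even[OF ev] by blast
      have e: "frac (- real q * \<alpha>) = 1 - \<theta>"
      proof -
        have "- real q * \<alpha> = (1 - \<theta>) + of_int (- int p - 1)" unfolding \<theta>_def by simp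
        then have "frac (- real q * \<alpha>) = frac (1 - \<theta>)" by (simp only: frac_add_of_int_right)
        then show ?thesis using n1 al1 by (simp add: frac_pos_small)
      qed
      have mm: "min 0 (1-\<theta>) = (0::real)" "max 0 (1-\<theta>) = 1 - \<theta>" using n1 al1 by auto
      have opt2: False if h: "{0<..<1-\<theta>} \<subseteq> C"
      proof -
        have y1: "(1-\<alpha>)/2 \<in> C" using h n1 al0 al1 by auto
        have y2: "1 - (\<alpha>+\<theta>)/2 \<in> C" using h n1 al0 al1 by auto
        have "letter conv \<alpha> ((1-\<alpha>)/2) = 0" by (rule L0p) (use al0 al1 in auto)
        moreover have "letter conv \<alpha> (1 - (\<alpha>+\<theta>)/2) = 1" by (rule L1p) (use n1 al0 al1 in auto)
        ultimately show False using inC0[OF y1] inC0[OF y2] by simp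
      qed
      have sub: "{0..<1} - {0..1-\<theta>} \<subseteq> C" "C \<subseteq> {0..<1} - {0<..<1-\<theta>}"
        using arc opt2 unfolding arc_endpoints_def Let_def e mm by auto
      have y3: "1 - \<theta>/2 \<in> C" using sub(1) n1 by auto
      have l3: "letter conv \<alpha> (1 - \<theta>/2) = 1" by (rule L1p) (use n1 al0 al1 in auto)
      have l3q: "letter conv \<alpha> (1 - \<theta>/2 + \<theta> - \<alpha>) = 1" by (rule L1p) (use n1 al0 al1 in auto)
      have yr: "y = 0 \<or> (1 - \<theta> \<le> y \<and> y < 1)" using sub(2) yC by auto
      have c1: False if "conv" "y = 0"
      proof -
        have "letter conv \<alpha> y = 0" using that al1 LT0 by simp
        then show False using inC0[OF yC] inC0[OF y3] l3 by simp
      qed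
      have c2: False if "\<not> conv" "y = 1 - \<theta>"
      proof -
        have "letter conv \<alpha> (y + \<theta> - \<alpha>) = 0" using that al0 al1 LF1a by simp
        then show False using inCq[OF yC] inCq[OF y3] l3q by simp
      qed
      show ?thesis using yr c1 c2 by blast
    qed
    have CJo: "0 \<le> y \<and> y \<le> - \<theta> \<and> (conv \<longrightarrow> y \<noteq> - \<theta>) \<and> (\<not> conv \<longrightarrow> y \<noteq> 0)" if od: "odd k" and yC: "y \<in> C" for y
    proof -
      obtain n1: "\<theta> < 0" "- \<theta> < \<alpha>" "- \<theta> < 1-\<alpha>" "(Q1 - P1) * (- \<theta>) < 1 - \<alpha>" using num_odd[OF od] by blast
      have e: "frac (- real q * \<alpha>) = - \<theta>"
      proof -
        have "- real q * \<alpha> = (- \<theta>) + of_int (- int p)" unfolding \<theta>_def by simp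
        then have "frac (- real q * \<alpha>) = frac (- \<theta>)" by (simp only: frac_add_of_int_right)
        then show ?thesis using n1 al1 by (simp add: frac_pos_small)
      qed
      have mm: "min 0 (- \<theta>) = (0::real)" "max 0 (- \<theta>) = - \<theta>" using n1 by auto
      have opt2: False if h: "{0..<1} - {0..- \<theta>} \<subseteq> C"
      proof -
        have y1: "(- \<theta> + 1 - \<alpha>)/2 \<in> C" using h n1 al0 al1 by auto
        have y2: "1 - \<alpha>/2 \<in> C" using h n1 al0 al1 by auto
        have "letter conv \<alpha> ((- \<theta> + 1 - \<alpha>)/2) = 0" by (rule L0p) (use n1 al0 al1 in auto)
        moreover have "letter conv \<alpha> (1 - \<alpha>/2) = 1" by (rule L1p) (use n1 al0 al1 in auto)
        ultimately show False using inC0[OF y1] inC0[OF y2] by simp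
      qed
      have sub: "{0<..<- \<theta>} \<subseteq> C" "C \<subseteq> {0..- \<theta>}"
        using arc opt2 unfolding arc_endpoints_def Let_def e mm by auto
      have y3: "- \<theta>/2 \<in> C" using sub(1) n1 by auto
      have l3: "letter conv \<alpha> (- \<theta>/2) = 0" by (rule L0p) (use n1 al0 al1 in auto)
      have l3q: "letter conv \<alpha> (- \<theta>/2 + \<theta> - \<alpha>) = 0" by (rule L0n) (use n1 al0 al1 in auto)
      have yr: "0 \<le> y \<and> y \<le> - \<theta>" using sub(2) yC by auto
      have c1: False if "conv" "y = - \<theta>"
      proof -
        have "letter conv \<alpha> (y + \<theta> - \<alpha>) = 1" using that al0 al1 LTa by simp
        then show False using inCq[OF yC] inCq[OF y3] l3q by simp
      qed
      have c2: False if "\<not> conv" "y = 0"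
      proof -
        have "letter conv \<alpha> y = 1" using that LF0 by simp
        then show False using inC0[OF yC] inC0[OF y3] l3 by simp
      qed
      show ?thesis using yr c1 c2 by blast
    qed
    define Jc where "Jc c \<longleftrightarrow> (if even k then (- \<theta> \<le> c \<and> c \<le> 0 \<and> (conv \<longrightarrow> c \<noteq> 0) \<and> (\<not> conv \<longrightarrow> c \<noteq> - \<theta>))
        else (0 \<le> c \<and> c \<le> - \<theta> \<and> (conv \<longrightarrow> c \<noteq> - \<theta>) \<and> (\<not> conv \<longrightarrow> c \<noteq> 0)))" for c
    have J: "\<exists>c N. x = c + of_int N \<and> Jc c" if h: "\<forall>i<q. letter conv \<alpha> (x + real i * \<alpha>) = s!i" for x
    proof -
      have fC: "frac x \<in> C" using toC[OF h] .
      have xf: "x = frac x + of_int \<lfloor>x\<rfloor>" by (simp add: frac_def)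
      show ?thesis
      proof (cases "even k")
        case True
        note n1 = num_even[OF True]
        show ?thesis
        proof (cases "frac x = 0")
          case True
          then have "\<not> conv" using CJe[OF \<open>even k\<close> fC] n1 al1 by (auto simp del: frac_eq_0_iff)
          then have "Jc 0" unfolding Jc_def using \<open>even k\<close> n1 by auto
          then show ?thesis using xf True by (metis add_0)
        next
          case False
          then have r: "1 - \<theta> \<le> frac x \<and> frac x < 1 \<and> (\<not> conv \<longrightarrow> frac x \<noteq> 1 - \<theta>)" using CJe[OF \<open>even k\<close> fC] by auto
          have "Jc (frac x - 1)" unfolding Jc_def using \<open>even k\<close> n1 r by auto
          moreover have "x = (frac x - 1) + of_int (\<lfloor>x\<rfloor> + 1)" using xf by simp
          ultimately show ?thesis by blast
        qed
      next
        case False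
        have "Jc (frac x)" unfolding Jc_def using False CJo[OF False fC] by auto
        then show ?thesis using xf by blast
      qed
    qed
    define L where "L = (if even k then 1 else (0::nat))"
    have lamE: "real lam + 1 = P1" if "even k"
    proof -
      have "cf_p a (Suc k) \<ge> 1" using cf_pos[OF A1 A2, of k] by simp
      then show ?thesis using that unfolding lam_def P1_def by (simp add: of_nat_diff)
    qed
    have lamO: "real lam + 1 = Q1 - P1" if "odd k"
    proof -
      have "cf_p a (Suc k) + 1 \<le> cf_q a (Suc k)" using cf_pos[OF A1 A2, of k] by simp
      then show ?thesis using that unfolding lam_def P1_def Q1_def by (simp add: of_nat_diff)
    qed
    have E1: "letter conv \<alpha> (c + real m * \<theta> - \<alpha>) = L" if jc: "Jc c" and m1: "1 \<le> m" and m2: "m \<le> lam + 1" for c m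
    proof (cases "even k")
      case True
      note n1 = num_even[OF True]
      have jc': "- \<theta> \<le> c \<and> c \<le> 0 \<and> (conv \<longrightarrow> c \<noteq> 0) \<and> (\<not> conv \<longrightarrow> c \<noteq> - \<theta>)" using jc True unfolding Jc_def by simp
      have mr: "1 \<le> real m" "real m \<le> P1" using m1 m2 lamE[OF True] by linarith+
      have a: "\<theta> \<le> real m * \<theta>" proof -
        have "1 * \<theta> \<le> real m * \<theta>" by (rule mult_right_mono) (use mr n1 in auto)
        then show ?thesis by simp qed
      have b: "real m * \<theta> \<le> P1 * \<theta>" by (rule mult_right_mono) (use mr n1 in auto)
      show ?thesis
      proof (cases "c + real m * \<theta> - \<alpha> = - \<alpha>")
        case True
        then have "c = - \<theta>" using a jc' by linarith
        then have conv using jc' n1 by auto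
        then show ?thesis using True LTa[OF al0 al1] \<open>even k\<close> unfolding L_def by simp
      next
        case False
        have g: "0 \<le> c + real m * \<theta>" using a jc' by linarith
        have "c + real m * \<theta> \<noteq> 0" using False by simp
        then have g2: "0 < c + real m * \<theta>" using g by simp
        have z1: "- \<alpha> < c + real m * \<theta> - \<alpha>" using g2 by linarith
        have z2: "c + real m * \<theta> - \<alpha> < 0" using b jc' n1 by linarith
        have "letter conv \<alpha> (c + real m * \<theta> - \<alpha>) = 1" using L1n[OF z1 z2 al1] .
        then show ?thesis using \<open>even k\<close> unfolding L_def by simp
      qed
    next
      case False
      note n1 = num_odd[OF False]
      have jc': "0 \<le> c \<and> c \<le> - \<theta> \<and> (conv \<longrightarrow> c \<noteq> - \<theta>) \<and> (\<not> conv \<longrightarrow> c \<noteq> 0)" using jc False unfolding Jc_def by simp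
      have mr: "1 \<le> real m" "real m \<le> Q1 - P1" using m1 m2 lamO[OF False] by linarith+
      have a: "- \<theta> \<le> real m * (- \<theta>)" proof -
        have "1 * (- \<theta>) \<le> real m * (- \<theta>)" by (rule mult_right_mono) (use mr n1 in auto)
        then show ?thesis by simp qed
      have b: "real m * (- \<theta>) \<le> (Q1 - P1) * (- \<theta>)" by (rule mult_right_mono) (use mr n1 in auto)
      show ?thesis
      proof (cases "c + real m * \<theta> - \<alpha> = - \<alpha>")
        case True
        then have "c = - \<theta>" using a jc' by linarith
        then have "\<not> conv" using jc' n1 by auto
        then show ?thesis using True LFa[OF al0 al1] \<open>odd k\<close> unfolding L_def by simp
      next
        case False
        have g: "c + real m * \<theta> \<le> 0" using a jc' by linarith
        have "c + real m * \<theta> \<noteq> 0" using False by simp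
        then have g2: "c + real m * \<theta> < 0" using g by simp
        have z1: "-1 < c + real m * \<theta> - \<alpha>" using b jc' n1 by linarith
        have z2: "c + real m * \<theta> - \<alpha> < - \<alpha>" using g2 by linarith
        have "letter conv \<alpha> (c + real m * \<theta> - \<alpha>) = 0" using L0n[OF z1 z2 al0] .
        then show ?thesis using \<open>odd k\<close> unfolding L_def by simp
      qed
    qed
    have E2: "letter conv \<alpha> (c - real m * \<theta>) = L" if jc: "Jc c" and m2: "m \<le> lam" for c m
    proof (cases "even k")
      case True
      note n1 = num_even[OF True]
      have jc': "- \<theta> \<le> c \<and> c \<le> 0 \<and> (conv \<longrightarrow> c \<noteq> 0) \<and> (\<not> conv \<longrightarrow> c \<noteq> - \<theta>)" using jc True unfolding Jc_def by simp
      have mr: "real m + 1 \<le> P1" using m2 lamE[OF True] by linarith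
      have a: "0 \<le> real m * \<theta>" using n1 by simp
      have b: "(real m + 1) * \<theta> \<le> P1 * \<theta>" by (rule mult_right_mono) (use mr n1 in auto)
      show ?thesis
      proof (cases "c - real m * \<theta> = 0")
        case True
        then have "c = 0" using a jc' by linarith
        then have "\<not> conv" using jc' n1 by auto
        then show ?thesis using True LF0 \<open>even k\<close> unfolding L_def by simp
      next
        case False
        have g: "c - real m * \<theta> \<le> 0" using a jc' by linarith
        then have z2: "c - real m * \<theta> < 0" using False by simp
        have bb: "(real m + 1) * \<theta> = real m * \<theta> + \<theta>" by (simp add: algebra_simps)
        have z1: "- \<alpha> < c - real m * \<theta>" using b bb jc' n1 by linarith
        have "letter conv \<alpha> (c - real m * \<theta>) = 1" using L1n[OF z1 z2 al1] .
        then show ?thesis using \<open>even k\<close> unfolding L_def by simp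
      qed
    next
      case False
      note n1 = num_odd[OF False]
      have jc': "0 \<le> c \<and> c \<le> - \<theta> \<and> (conv \<longrightarrow> c \<noteq> - \<theta>) \<and> (\<not> conv \<longrightarrow> c \<noteq> 0)" using jc False unfolding Jc_def by simp
      have mr: "real m + 1 \<le> Q1 - P1" using m2 lamO[OF False] by linarith
      have a: "0 \<le> real m * (- \<theta>)" by (intro mult_nonneg_nonneg) (use n1 in auto)
      have b: "(real m + 1) * (- \<theta>) \<le> (Q1 - P1) * (- \<theta>)" by (rule mult_right_mono) (use mr n1 in auto)
      show ?thesis
      proof (cases "c - real m * \<theta> = 0")
        case True
        then have "c = 0" using a jc' by linarith
        then have conv using jc' n1 by auto
        then show ?thesis using True LT0[OF al1] \<open>odd k\<close> unfolding L_def by simp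
      next
        case False
        have g: "0 \<le> c - real m * \<theta>" using a jc' by linarith
        then have z1: "0 < c - real m * \<theta>" using False by simp
        have bb: "(real m + 1) * (- \<theta>) = real m * (- \<theta>) + (- \<theta>)" by (simp add: algebra_simps)
        have z2: "c - real m * \<theta> < 1 - \<alpha>" using b bb jc' n1 by linarith
        have "letter conv \<alpha> (c - real m * \<theta>) = 0" using L0p[OF z1 z2 al0] .
        then show ?thesis using \<open>odd k\<close> unfolding L_def by simp
      qed
    qed
    obtain \<rho> m0 where wdef: "w = map (\<lambda>i. rot_word conv \<alpha> \<rho> (m0 + i)) [0..<length w]"
      using assms(3) unfolding lang_def by blast
    define x0 where "x0 = \<rho> + real m0 * \<alpha>"
    have wl: "w!i = letter conv \<alpha> (x0 + real i * \<alpha>)" if "i < length w" for i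
    proof -
      have "w!i = map (\<lambda>i. rot_word conv \<alpha> \<rho> (m0 + i)) [0..<length w] ! i"
        using arg_cong[OF wdef, of "\<lambda>l. l ! i"] .
      also have "\<dots> = rot_word conv \<alpha> \<rho> (m0 + i)" using that by simp
      also have "\<dots> = letter conv \<alpha> (x0 + real i * \<alpha>)" unfolding rot_word_def x0_def
        by (simp add: algebra_simps)
      finally show ?thesis .
    qed
    have pre: "prefix s w" and suf: "suffix s w" and dv: "length s dvd length w"
      using assms(4) unfolding complete_first_return_def by blast+
    obtain zs where wz: "w = s @ zs" using pre unfolding prefix_def by blast
    obtain zs' where wz': "w = zs' @ s" using suf unfolding suffix_def by blast
    have lx0: "letter conv \<alpha> (x0 + real i * \<alpha>) = s!i" if "i < q" for i
    proof -
      have "s ! i = w ! i" using that sl wz by (simp add: nth_append)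
      then show ?thesis using wl[of i] that sl wz by simp
    qed
    obtain c0 N0 where c0: "x0 = c0 + of_int N0" "Jc c0" using J[of x0] lx0 by blast
    have hds: "hd s = L"
    proof -
      have "s \<noteq> []" using sl qpos by auto
      then have "hd s = s ! 0" by (simp add: hd_conv_nth)
      also have "\<dots> = letter conv \<alpha> x0" using lx0[of 0] qpos by simp
      also have "\<dots> = letter conv \<alpha> (c0 - real 0 * \<theta>)" using c0(1) by (simp add: letter_int)
      also have "\<dots> = L" by (rule E2) (use c0 in auto)
      finally show ?thesis .
    qed
    have lasts: "last s = L"
    proof -
      have "s \<noteq> []" using sl qpos by auto
      then have "last s = s ! (q - 1)" using sl by (simp add: last_conv_nth)
      also have "\<dots> = letter conv \<alpha> (x0 + real (q - 1) * \<alpha>)" using lx0[of "q - 1"] qpos by simp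
      also have "x0 + real (q - 1) * \<alpha> = (c0 + real 1 * \<theta> - \<alpha>) + of_int (N0 + int p)"
        using c0(1) qa by simp
      also have "letter conv \<alpha> \<dots> = letter conv \<alpha> (c0 + real 1 * \<theta> - \<alpha>)" by (rule letter_int)
      also have "\<dots> = L" by (rule E1) (use c0 in auto)
      finally show ?thesis .
    qed
    obtain K where K: "length w = q * K" using dv sl by (auto elim: dvdE)
    have wlen: "length w = (n + 2) * q" if "0 < n"
    proof -
      have "length w - 2 * q = (K - 2) * q" using K by (simp add: diff_mult_distrib mult.commute[of q K])
      then have "n = K - 2" unfolding n_def using qpos by simp
      then have "K = n + 2" using that by linarith
      then show ?thesis using K by (simp only: mult.commute)
    qed
    have claim1: "last (u j) = last s" if j: "j < lam" "j < n" for j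
    proof -
      have wn: "length w = (n + 2) * q" using wlen j by simp
      have le: "q + j * q + q \<le> length w"
      proof -
        have "q + j * q + q = (j + 2) * q" by (simp add: algebra_simps)
        also have "\<dots> \<le> (n + 2) * q" by (rule mult_le_mono1) (use j in simp)
        finally show ?thesis using wn by simp
      qed
      have "last (u j) = w ! (q + j * q + q - 1)" unfolding u_def using last_take_drop[OF qpos] le by simp
      also have "\<dots> = letter conv \<alpha> (x0 + real (q + j * q + q - 1) * \<alpha>)" using wl le qpos by simp
      also have "x0 + real (q + j * q + q - 1) * \<alpha> = (c0 + real (j + 2) * \<theta> - \<alpha>) + of_int (N0 + int ((j + 2) * p))"
      proof -
        have hr: "real (q + j * q + q - 1) = (real j + 2) * real q - 1" using qpos by (simp add: of_nat_diff algebra_simps)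
        have "x0 + real (q + j * q + q - 1) * \<alpha> = x0 + ((real j + 2) * real q - 1) * \<alpha>" by (simp only: hr)
        also have "\<dots> = (c0 + real (j + 2) * \<theta> - \<alpha>) + of_int (N0 + int ((j + 2) * p))"
          using c0(1) unfolding \<theta>_def by (simp add: algebra_simps)
        finally show ?thesis .
      qed
      also have "letter conv \<alpha> \<dots> = letter conv \<alpha> (c0 + real (j + 2) * \<theta> - \<alpha>)" by (rule letter_int)
      also have "\<dots> = L" by (rule E1) (use c0 j in auto)
      finally show ?thesis using lasts by simp
    qed
    have claim2: "hd (u j) = hd s" if j: "n - lam \<le> j" "j < n" for j
    proof -
      have wn: "length w = (n + 2) * q" using wlen j by simp
      have le: "q + j * q + q \<le> length w"
      proof -
        have "q + j * q + q = (j + 2) * q" by (simp add: algebra_simps)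
        also have "\<dots> \<le> (n + 2) * q" by (rule mult_le_mono1) (use j in simp)
        finally show ?thesis using wn by simp
      qed
      define y where "y = x0 + real ((n + 1) * q) * \<alpha>"
      have zl: "length zs' = (n + 1) * q" using wz' wn sl by simp
      have ly: "letter conv \<alpha> (y + real i * \<alpha>) = s!i" if "i < q" for i
      proof -
        have "s ! i = w ! ((n + 1) * q + i)" using that zl wz' by (simp add: nth_append)
        also have "\<dots> = letter conv \<alpha> (x0 + real ((n + 1) * q + i) * \<alpha>)" using wl that wn by simp
        also have "x0 + real ((n + 1) * q + i) * \<alpha> = y + real i * \<alpha>" unfolding y_def by (simp add: algebra_simps)
        finally show ?thesis by simp
      qed
      obtain c1 N1 where c1: "y = c1 + of_int N1" "Jc c1" using J[of y] ly by blast
      have "hd (u j) = w ! (q + j * q)" unfolding u_def by (rule hd_take_drop[OF qpos le])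
      also have "\<dots> = letter conv \<alpha> (x0 + real (q + j * q) * \<alpha>)" using wl le qpos by simp
      also have "x0 + real (q + j * q) * \<alpha> = (c1 - real (n - j) * \<theta>) + of_int (N1 - int ((n - j) * p))"
      proof -
        have "real (n - j) = real n - real j" using j by (simp add: of_nat_diff)
        then show ?thesis using c1(1) unfolding \<theta>_def y_def by (simp add: algebra_simps of_nat_diff j(2) less_imp_le)
      qed
      also have "letter conv \<alpha> \<dots> = letter conv \<alpha> (c1 - real (n - j) * \<theta>)" by (rule letter_int)
      also have "\<dots> = L" by (rule E2) (use c1 j in auto)
      finally show ?thesis using hds by simp
    qed
    show ?thesis using claim1 claim2 hds lasts by simp
  qed
  show ?thesis unfolding Let_def using main unfolding u_def n_def lam_def q_def .
qed


end
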